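(* Let $m,n\ge0$, $0\le k\le\min(m,n)$, and let $i,j$ be integers with $0\le i\le m$, $0\le j\le n$, $k\le i+j\le m+n-k$. Then $$\binom{m+n-k}{i,\ j,\ m+n-k-i-j}\,c_{m,n,k}(m-i,\,n-j)=(-1)^k\binom{m+n-k}{m-i,\ n-j,\ i+j-k}\,c_{m,n,k}(i,j).$$
   Context: Multinomial coefficients: $\binom{a+b+c}{a,\ b,\ c}=\frac{(a+b+c)!}{a!\,b!\,c!}$ for nonnegative $a,b,c$. Let $e,f,h$ be the standard basis of $\mathfrak{sl}(2,\mathbb{C})$. $V(n)$ is the irreducible representation of highest weight $n$ with fixed highest weight vector $\phi_n$; $\{f^i\phi_n\}_{0\le i\le n}$ is a basis, $f^{n+1}\phi_n=0$. $\mathfrak{sl}(2)$ acts on $V(m)\otimes V(n)$ by $X(v\otimes w)=Xv\otimes w+v\otimes Xw$. For any $m,n\ge 0$ and $0\le k\le\min(m,n)$, $\phi_{m,n,k}=\sum_{l=0}^{k}(-1)^l\binom{m-l}{k-l}\binom{n-k+l}{l} f^l\phi_m\otimes f^{k-l}\phi_n\in V(m)\otimes V(n)$ (a highest weight vector of weight $m+n-2k$). The coordinates $c_{m,n,k}(i,j)$ are defined by $f^{p-k}\phi_{m,n,k}=\sum_{i+j=p,\,0\le i\le m,\,0\le j\le n} c_{m,n,k}(i,j)\, f^i\phi_m\otimes f^j\phi_n$ for $k\le p\le m+n-k$. *)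

theory Defs
  imports Complex_Main
begin

definition multinom3 :: "nat \<Rightarrow> nat \<Rightarrow> nat \<Rightarrow> nat" where
  "multinom3 a b c = fact (a + b + c) div (fact a * fact b * fact c)"

text \<open>An element of V(m) \<otimes> V(n) is represented by its coordinate function with respect to
  the basis f^i phi_m \<otimes> f^j phi_n (0 \<le> i \<le> m, 0 \<le> j \<le> n); coordinates outside this range are 0.\<close>
type_synonym tens = "nat \<times> nat \<Rightarrow> complex"

text \<open>Basis vector f^i phi_m \<otimes> f^j phi_n (zero if out of range, since f^(m+1) phi_m = 0).\<close>
definition basis_t :: "nat \<Rightarrow> nat \<Rightarrow> nat \<Rightarrow> nat \<Rightarrow> tens" where
  "basis_t m n i j = (\<lambda>(a,b). if a = i \<and> b = j \<and> i \<le> m \<and> j \<le> n then 1 else 0)"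

text \<open>Action of f on V(m) \<otimes> V(n): f(v \<otimes> w) = fv \<otimes> w + v \<otimes> fw with f (f^i phi_m) = f^(i+1) phi_m,
  which is 0 when i = m. In coordinates:\<close>
definition f_act :: "nat \<Rightarrow> nat \<Rightarrow> tens \<Rightarrow> tens" where
  "f_act m n x = (\<lambda>(a,b). if a \<le> m \<and> b \<le> n then
       (if a \<ge> 1 then x (a - 1, b) else 0) + (if b \<ge> 1 then x (a, b - 1) else 0) else 0)"

definition phi :: "nat \<Rightarrow> nat \<Rightarrow> nat \<Rightarrow> tens" where
  "phi m n k = (\<lambda>ab. \<Sum>l=0..k. (-1)^l * of_nat ((m - l) choose (k - l)) * of_nat ((n - k + l) choose l)
                       * basis_t m n l (k - l) ab)"

definition coef :: "nat \<Rightarrow> nat \<Rightarrow> nat \<Rightarrow> nat \<Rightarrow> nat \<Rightarrow> complex" where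
  "coef m n k i j = ((f_act m n ^^ (i + j - k)) (phi m n k)) (i, j)"

end

theory Submission imports Defs begin

definition cb :: "nat \<Rightarrow> int \<Rightarrow> int" where
  "cb a r = (if r < 0 then 0 else int (a choose nat r))"

definition SS :: "nat \<Rightarrow> nat \<Rightarrow> nat \<Rightarrow> int \<Rightarrow> int \<Rightarrow> int" where
  "SS k a b x y = (\<Sum>l=0..k. (-1)^l * int (k choose l) * cb a (x - int l) * cb b (y - int k + int l))"

lemma choose_rec_nat: "Suc t * (a choose Suc t) = (a - t) * (a choose t)"
  using binomial_absorption[of t a] binomial_absorb_comp[of a t] by simp

lemma cb_rec: "r * cb a r = (int a - r + 1) * cb a (r - 1)"
proof (cases "r \<le> 0")
  case True
  then have "cb a (r - 1) = 0" by (simp add: cb_def)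
  moreover have "r * cb a r = 0" using True by (cases "r = 0") (simp_all add: cb_def)
  ultimately show ?thesis by simp
next
  case False
  define t where "t = nat (r - 1)"
  have r: "r = int (Suc t)" using False unfolding t_def by simp
  have nr: "nat r = Suc t" using r by (simp only: nat_int)
  have c1: "cb a r = int (a choose Suc t)" using r nr by (simp add: cb_def)
  have c2: "cb a (r - 1) = int (a choose t)" using r by (simp add: cb_def)
  show ?thesis
  proof (cases "t \<le> a")
    case True
    have "int (Suc t * (a choose Suc t)) = int ((a - t) * (a choose t))" using choose_rec_nat by metis
    then have "int (Suc t) * int (a choose Suc t) = (int a - int t) * int (a choose t)"
      using True by (simp only: of_nat_mult of_nat_diff)
    then show ?thesis unfolding c1 c2 using r by simp
  next
    case False
    then have z1: "a choose Suc t = 0" and z2: "a choose t = 0" by simp_all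
    show ?thesis unfolding c1 c2 z1 z2 by simp
  qed
qed

lemma cb_sym: "cb a (int a - r) = cb a r"
proof -
  consider "r < 0" | "r > int a" | "0 \<le> r \<and> r \<le> int a" by linarith
  then show ?thesis
  proof cases
    case 1 then show ?thesis by (simp add: cb_def)
  next
    case 2 then show ?thesis by (simp add: cb_def)
  next
    case 3
    then obtain t where t: "r = int t" "t \<le> a" by (metis nat_0_le nat_le_iff)
    then have "nat (int a - r) = a - t" by simp
    then show ?thesis using t using binomial_symmetric[of t a] by (simp add: cb_def)
  qed
qed

lemma telesc:
  fixes g :: "int \<Rightarrow> int"
  shows "(\<Sum>l=0..k. (-1)^l * int (k choose l) * (int (k - l) * g (int l) + int l * g (int l - 1))) = 0"
proof (cases k)
  case 0 then show ?thesis by simp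
next
  case (Suc k')
  have key: "(k - l) * (k choose l) = Suc l * (k choose Suc l)" for l
    using binomial_absorption[of l k] binomial_absorb_comp[of k l] by simp
  have "(\<Sum>l=0..k. (-1)^l * int (k choose l) * (int (k - l) * g (int l) + int l * g (int l - 1)))
     = (\<Sum>l=0..k. (-1)^l * int (k choose l) * int (k - l) * g (int l))
       + (\<Sum>l=0..k. (-1)^l * int (k choose l) * int l * g (int l - 1))"
    unfolding sum.distrib[symmetric] by (rule sum.cong) (simp_all add: algebra_simps)
  also have "(\<Sum>l=0..k. (-1)^l * int (k choose l) * int (k - l) * g (int l))
      = (\<Sum>l=0..k'. (-1)^l * int (k choose l) * int (k - l) * g (int l))"
    using Suc by simp
  also have "(\<Sum>l=0..k. (-1)^l * int (k choose l) * int l * g (int l - 1))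
      = (\<Sum>l=0..k'. (-1)^Suc l * int (k choose Suc l) * int (Suc l) * g (int l))"
    using Suc by (simp only: sum.atLeast0_atMost_Suc_shift) simp
  also have "(\<Sum>l=0..k'. (-1)^l * int (k choose l) * int (k - l) * g (int l))
     + (\<Sum>l=0..k'. (-1)^Suc l * int (k choose Suc l) * int (Suc l) * g (int l)) = 0"
  proof -
    have "(-1)^l * int (k choose l) * int (k - l) * g (int l) + (-1)^Suc l * int (k choose Suc l) * int (Suc l) * g (int l) = 0" for l
    proof -
      have "int (k choose l) * int (k - l) = int (k choose Suc l) * int (Suc l)"
        using key[of l] by (metis mult.commute of_nat_mult)
      moreover have "(-1)^l * int (k choose l) * int (k - l) * g (int l) + (-1)^Suc l * int (k choose Suc l) * int (Suc l) * g (int l)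
        = (-1)^l * g (int l) * (int (k choose l) * int (k - l)) - (-1)^l * g (int l) * (int (k choose Suc l) * int (Suc l))"
        by (simp add: algebra_simps)
      ultimately show ?thesis by simp
    qed
    then have "(\<Sum>l=0..k'. (-1)^l * int (k choose l) * int (k - l) * g (int l) + (-1)^Suc l * int (k choose Suc l) * int (Suc l) * g (int l)) = 0"
      by (intro sum.neutral) blast
    then show ?thesis by (simp only: sum.distrib[symmetric])
  qed
  finally show ?thesis .
qed

lemma ring_aux:
  fixes x y a b k l P A0 A1 B0 B1 :: int
  assumes "(x - l) * A0 = (a - (x - l) + 1) * A1" "(y - k + l) * B0 = (b - (y - k + l) + 1) * B1"
  shows "(a + k - x + 1) * (P * A1 * B0) + (b + k - y + 1) * (P * A0 * B1)
       = (x + y - k) * (P * A0 * B0) + P * ((k - l) * A1 * B0 + l * A0 * B1)"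
  using assms by algebra

lemma SS_rec:
  "(x + y - int k) * SS k a b x y = (int a + int k - x + 1) * SS k a b (x - 1) y + (int b + int k - y + 1) * SS k a b x (y - 1)"
proof -
  define g where "g = (\<lambda>l'. cb a (x - 1 - l') * cb b (y - int k + l'))"
  have trm: "(int a + int k - x + 1) * ((-1)^l * int (k choose l) * cb a (x - 1 - int l) * cb b (y - int k + int l))
     + (int b + int k - y + 1) * ((-1)^l * int (k choose l) * cb a (x - int l) * cb b (y - 1 - int k + int l))
     = (x + y - int k) * ((-1)^l * int (k choose l) * cb a (x - int l) * cb b (y - int k + int l))
       + (-1)^l * int (k choose l) * (int (k - l) * g (int l) + int l * g (int l - 1))"
    if "l \<in> {0..k}" for l
  proof -
    have lk: "int (k - l) = int k - int l" using that by simp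
    have e1: "x - 1 - int l = x - int l - 1" by simp
    have e2: "y - 1 - int k + int l = (y - int k + int l) - 1" by simp
    have e3: "x - 1 - (int l - 1) = x - int l" by simp
    have e4: "y - int k + (int l - 1) = (y - int k + int l) - 1" by simp
    have h1: "(x - int l) * cb a (x - int l) = (int a - (x - int l) + 1) * cb a (x - int l - 1)" by (rule cb_rec)
    have h2: "(y - int k + int l) * cb b (y - int k + int l) = (int b - (y - int k + int l) + 1) * cb b ((y - int k + int l) - 1)" by (rule cb_rec)
    show ?thesis unfolding g_def lk e1 e2 e3 e4
      using ring_aux[OF h1 h2, of "(-1)^l * int (k choose l)"] by (simp add: mult.assoc)
  qed
  have "(int a + int k - x + 1) * SS k a b (x - 1) y + (int b + int k - y + 1) * SS k a b x (y - 1)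
     = (\<Sum>l=0..k. (int a + int k - x + 1) * ((-1)^l * int (k choose l) * cb a (x - 1 - int l) * cb b (y - int k + int l))
     + (int b + int k - y + 1) * ((-1)^l * int (k choose l) * cb a (x - int l) * cb b (y - 1 - int k + int l)))"
    unfolding SS_def by (simp add: sum.distrib sum_distrib_left)
  also have "\<dots> = (\<Sum>l=0..k. (x + y - int k) * ((-1)^l * int (k choose l) * cb a (x - int l) * cb b (y - int k + int l))
       + (-1)^l * int (k choose l) * (int (k - l) * g (int l) + int l * g (int l - 1)))"
    by (rule sum.cong[OF refl]) (rule trm)
  also have "\<dots> = (x + y - int k) * SS k a b x y + (\<Sum>l=0..k. (-1)^l * int (k choose l) * (int (k - l) * g (int l) + int l * g (int l - 1)))"
    unfolding SS_def by (simp add: sum.distrib sum_distrib_left)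
  also have "\<dots> = (x + y - int k) * SS k a b x y" using telesc[of k g] by simp
  finally show ?thesis by simp
qed

lemma SS_neg1: "x < 0 \<Longrightarrow> SS k a b x y = 0"
  unfolding SS_def by (intro sum.neutral) (simp add: cb_def)

lemma SS_neg2: "y < 0 \<Longrightarrow> SS k a b x y = 0"
  unfolding SS_def by (intro sum.neutral) (simp add: cb_def)

lemma SS_sym: "SS k a b (int a + int k - x) (int b + int k - y) = (-1)^k * SS k a b x y"
proof -
  have "SS k a b (int a + int k - x) (int b + int k - y)
      = (\<Sum>l=0..k. (-1)^(k - l) * int (k choose (k - l)) * cb a (int a + int k - x - int (k - l)) * cb b (int b + int k - y - int k + int (k - l)))"
    unfolding SS_def by (rule sum.reindex_bij_witness[where i="\<lambda>l. k - l" and j="\<lambda>l. k - l"]) auto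
  also have "\<dots> = (\<Sum>l=0..k. (-1)^k * ((-1)^l * int (k choose l) * cb a (x - int l) * cb b (y - int k + int l)))"
  proof (rule sum.cong[OF refl])
    fix l assume "l \<in> {0..k}"
    then have lk: "l \<le> k" by simp
    have s1: "(-1::int)^(k - l) = (-1)^k * (-1)^l"
    proof -
      have "(-1::int)^k = (-1)^(k-l) * (-1)^l" using lk by (simp add: power_add[symmetric])
      then show ?thesis by (metis (no_types, lifting) minus_one_mult_self mult.assoc mult.commute mult_1)
    qed
    have s2: "k choose (k - l) = k choose l" using lk by (simp add: binomial_symmetric[symmetric])
    have s3: "int a + int k - x - int (k - l) = int a - (x - int l)" using lk by simp
    have s4: "int b + int k - y - int k + int (k - l) = int b - (y - int k + int l)" using lk by simp
    show "(-1)^(k - l) * int (k choose (k - l)) * cb a (int a + int k - x - int (k - l)) * cb b (int b + int k - y - int k + int (k - l))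
      = (-1)^k * ((-1)^l * int (k choose l) * cb a (x - int l) * cb b (y - int k + int l))"
      unfolding s1 s2 s3 s4 cb_sym by (simp add: mult.assoc)
  qed
  also have "\<dots> = (-1)^k * SS k a b x y" unfolding SS_def by (simp add: sum_distrib_left)
  finally show ?thesis .
qed

lemma base_nat:
  assumes "i \<le> k" "k \<le> m" "k \<le> n"
  shows "fact k * fact (m-k) * fact (n-k) * (((m - i) choose (k - i)) * ((n - k + i) choose i))
       = (fact (m-i) * fact (n-k+i) * (k choose i) :: nat)"
proof -
  have e1: "fact (k-i) * fact (m-k) * ((m - i) choose (k - i)) = (fact (m-i) :: nat)"
    using binomial_fact_lemma[of "k-i" "m-i"] assms by simp
  have e2: "fact i * fact (n-k) * ((n - k + i) choose i) = (fact (n-k+i) :: nat)"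
    using binomial_fact_lemma[of i "n-k+i"] assms by simp
  have e3: "fact i * fact (k-i) * (k choose i) = (fact k :: nat)"
    using binomial_fact_lemma[of i k] assms by simp
  have "fact k * fact (m-k) * fact (n-k) * (((m - i) choose (k - i)) * ((n - k + i) choose i))
      = (fact i * fact (k-i) * (k choose i)) * fact (m-k) * fact (n-k) * (((m - i) choose (k - i)) * ((n - k + i) choose i))"
    by (simp add: e3)
  also have "\<dots> = (fact (k-i) * fact (m-k) * ((m - i) choose (k - i))) * (fact i * fact (n-k) * ((n - k + i) choose i)) * (k choose i)"
    by (simp add: mult.assoc mult.left_commute)
  also have "\<dots> = fact (m-i) * fact (n-k+i) * (k choose i)" by (simp only: e1 e2)
  finally show ?thesis .
qed

lemma coef_formula:
  assumes km: "k \<le> m" and kn: "k \<le> n"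
  shows "i \<le> m \<Longrightarrow> j \<le> n \<Longrightarrow> i + j = k + q \<Longrightarrow>
    of_nat (fact k * fact (m-k) * fact (n-k)) * coef m n k i j
    = (of_int (int (fact q * fact (m-i) * fact (n-j)) * SS k (m-k) (n-k) (int i) (int j)) :: complex)"
proof (induction q arbitrary: i j)
  case 0
  then have ik: "i \<le> k" and jk: "j = k - i" by auto
  have c: "coef m n k i j = phi m n k (i, j)" using 0 by (simp add: coef_def)
  have "phi m n k (i, j) = (\<Sum>l=0..k. if l = i then (-1)^i * of_nat ((m - i) choose (k - i)) * of_nat ((n - k + i) choose i) else 0)"
    unfolding phi_def
  proof (rule sum.cong[OF refl])
    fix l assume l: "l \<in> {0..k}"
    show "(-1)^l * of_nat ((m - l) choose (k - l)) * of_nat ((n - k + l) choose l) * basis_t m n l (k - l) (i, j)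
      = (if l = i then (-1)^i * of_nat ((m - i) choose (k - i)) * of_nat ((n - k + i) choose i) else (0::complex))"
      using l 0 ik jk by (auto simp: basis_t_def)
  qed
  also have "\<dots> = (-1)^i * of_nat ((m - i) choose (k - i)) * of_nat ((n - k + i) choose i)"
    using ik by (simp add: sum.delta)
  finally have cv: "coef m n k i j = (-1)^i * of_nat ((m - i) choose (k - i)) * of_nat ((n - k + i) choose i)"
    using c by simp
  have "SS k (m-k) (n-k) (int i) (int j) = (\<Sum>l=0..k. if l = i then (-1)^i * int (k choose i) else 0)"
    unfolding SS_def
  proof (rule sum.cong[OF refl])
    fix l assume l: "l \<in> {0..k}"
    have "int j - int k + int l = int l - int i" using jk ik by simp
    then show "(-1)^l * int (k choose l) * cb (m - k) (int i - int l) * cb (n - k) (int j - int k + int l)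
      = (if l = i then (-1)^i * int (k choose i) else 0)"
      by (cases "l < i"; cases "l = i") (auto simp: cb_def)
  qed
  also have "\<dots> = (-1)^i * int (k choose i)" using ik by (simp add: sum.delta)
  finally have sv: "SS k (m-k) (n-k) (int i) (int j) = (-1)^i * int (k choose i)" .
  have nj: "n - j = n - k + i" using jk ik kn by simp
  have bn: "fact k * fact (m-k) * fact (n-k) * (((m - i) choose (k - i)) * ((n - k + i) choose i))
       = (fact (m-i) * fact (n-k+i) * (k choose i) :: nat)" by (rule base_nat[OF ik km kn])
  have "(of_nat (fact k * fact (m-k) * fact (n-k)) * coef m n k i j :: complex)
      = (-1)^i * of_nat (fact k * fact (m-k) * fact (n-k) * (((m - i) choose (k - i)) * ((n - k + i) choose i)))"
    unfolding cv by (simp add: algebra_simps)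
  also have "\<dots> = (-1)^i * of_nat (fact (m-i) * fact (n-k+i) * (k choose i))" by (simp only: bn)
  also have "\<dots> = of_int (int (fact 0 * fact (m-i) * fact (n-j)) * SS k (m-k) (n-k) (int i) (int j))"
    unfolding sv nj by (simp add: algebra_simps)
  finally show ?case .
next
  case (Suc q)
  define V where "V = (f_act m n ^^ q) (phi m n k)"
  define K :: complex where "K = of_nat (fact k * fact (m-k) * fact (n-k))"
  define F :: nat where "F = fact q * fact (m-i) * fact (n-j)"
  define S where "S = SS k (m-k) (n-k)"
  have c: "coef m n k i j = (if 1 \<le> i then V (i - 1, j) else 0) + (if 1 \<le> j then V (i, j - 1) else 0)"
    using Suc.prems by (simp add: coef_def V_def f_act_def)
  have A: "K * (if 1 \<le> i then V (i - 1, j) else 0) = of_int (int F * (int m - int i + 1) * S (int i - 1) (int j))"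
  proof (cases "1 \<le> i")
    case True
    have cv: "V (i - 1, j) = coef m n k (i - 1) j" using True Suc.prems by (simp add: coef_def V_def)
    have ih: "K * coef m n k (i - 1) j = of_int (int (fact q * fact (m-(i-1)) * fact (n-j)) * S (int (i-1)) (int j))"
      using Suc.IH[of "i-1" j] Suc.prems True unfolding K_def S_def by simp
    have "m - (i - 1) = Suc (m - i)" using True Suc.prems by linarith
    then have f: "fact (m - (i - 1)) = (m - i + 1) * (fact (m - i) :: nat)" by (simp add: fact_Suc)
    have "int (fact q * fact (m-(i-1)) * fact (n-j)) = int F * (int m - int i + 1)"
    proof -
      have h: "int (m - i) = int m - int i" using Suc.prems by simp
      show ?thesis unfolding F_def f of_nat_mult of_nat_add h by (simp add: algebra_simps)
    qed
    moreover have "int (i - 1) = int i - 1" using True by simp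
    ultimately show ?thesis using True ih cv by simp
  next
    case False
    then show ?thesis unfolding S_def using SS_neg1[of "int i - 1"] by simp
  qed
  have B: "K * (if 1 \<le> j then V (i, j - 1) else 0) = of_int (int F * (int n - int j + 1) * S (int i) (int j - 1))"
  proof (cases "1 \<le> j")
    case True
    have cv: "V (i, j - 1) = coef m n k i (j - 1)" using True Suc.prems by (simp add: coef_def V_def)
    have ih: "K * coef m n k i (j - 1) = of_int (int (fact q * fact (m-i) * fact (n-(j-1))) * S (int i) (int (j-1)))"
      using Suc.IH[of i "j-1"] Suc.prems True unfolding K_def S_def by simp
    have "n - (j - 1) = Suc (n - j)" using True Suc.prems by linarith
    then have f: "fact (n - (j - 1)) = (n - j + 1) * (fact (n - j) :: nat)" by (simp add: fact_Suc)
    have "int (fact q * fact (m-i) * fact (n-(j-1))) = int F * (int n - int j + 1)"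
    proof -
      have h: "int (n - j) = int n - int j" using Suc.prems by simp
      show ?thesis unfolding F_def f of_nat_mult of_nat_add h by (simp add: algebra_simps)
    qed
    moreover have "int (j - 1) = int j - 1" using True by simp
    ultimately show ?thesis using True ih cv by simp
  next
    case False
    then show ?thesis unfolding S_def using SS_neg2[of "int j - 1"] by simp
  qed
  have rec: "(int i + int j - int k) * S (int i) (int j) = (int m - int i + 1) * S (int i - 1) (int j) + (int n - int j + 1) * S (int i) (int j - 1)"
    using SS_rec[of "int i" "int j" k "m-k" "n-k"] km kn unfolding S_def by (simp add: of_nat_diff)
  have q1: "int i + int j - int k = int (Suc q)" using Suc.prems by simp
  have "K * coef m n k i j = of_int (int F * ((int m - int i + 1) * S (int i - 1) (int j) + (int n - int j + 1) * S (int i) (int j - 1)))"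
    unfolding c distrib_left A B by (simp add: algebra_simps)
  also have "\<dots> = of_int (int F * (int (Suc q) * S (int i) (int j)))" unfolding rec[symmetric] q1 ..
  also have "\<dots> = of_int (int (fact (Suc q) * fact (m-i) * fact (n-j)) * S (int i) (int j))"
    unfolding F_def by (simp add: algebra_simps)
  finally show ?case unfolding K_def S_def .
qed

lemma multinom3_mult: "multinom3 a b c * (fact a * fact b * fact c) = fact (a + b + c)"
proof -
  have e1: "fact c * fact (a + b) * ((a + b + c) choose c) = (fact (a + b + c) :: nat)"
    using binomial_fact_lemma[of c "a+b+c"] by simp
  have e2: "fact a * fact b * ((a + b) choose a) = (fact (a + b) :: nat)"
    using binomial_fact_lemma[of a "a+b"] by simp
  have "fact (a + b + c) = (fact a * fact b * fact c) * (((a + b) choose a) * ((a + b + c) choose c))"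
    using e1 e2 by (metis mult.assoc mult.commute)
  then have "fact a * fact b * fact c dvd (fact (a + b + c) :: nat)" by (metis dvd_triv_left)
  then show ?thesis unfolding multinom3_def by simp
qed

theorem proposition8p4:
  fixes m n k i j :: nat
  assumes "k \<le> min m n" and "i \<le> m" and "j \<le> n"
    and "k \<le> i + j" and "i + j \<le> m + n - k"
  shows "of_nat (multinom3 i j (m + n - k - i - j)) * coef m n k (m - i) (n - j)
       = (-1)^k * of_nat (multinom3 (m - i) (n - j) (i + j - k)) * coef m n k i j"
proof -
  have km: "k \<le> m" and kn: "k \<le> n" using assms(1) by auto
  define N where "N = m + n - k"
  define K :: complex where "K = of_nat (fact k * fact (m-k) * fact (n-k))"
  define S where "S = SS k (m-k) (n-k) (int i) (int j)"
  have K0: "K \<noteq> 0" unfolding K_def by simp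
  have c1: "K * coef m n k (m - i) (n - j) = of_int (int (fact (N - i - j) * fact (m - (m - i)) * fact (n - (n - j))) * SS k (m-k) (n-k) (int (m - i)) (int (n - j)))"
    unfolding K_def N_def by (rule coef_formula[OF km kn]) (use assms in auto)
  have c2: "K * coef m n k i j = of_int (int (fact (i + j - k) * fact (m - i) * fact (n - j)) * S)"
    unfolding K_def S_def by (rule coef_formula[OF km kn]) (use assms in auto)
  have sym: "SS k (m-k) (n-k) (int (m - i)) (int (n - j)) = (-1)^k * S"
  proof -
    have "int (m - i) = int (m - k) + int k - int i" "int (n - j) = int (n - k) + int k - int j"
      using assms km kn by auto
    then show ?thesis unfolding S_def using SS_sym by simp
  qed
  have m1: "multinom3 i j (N - i - j) * (fact i * fact j * fact (N - i - j)) = fact N"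
    using multinom3_mult[of i j "N - i - j"] assms unfolding N_def by simp
  have m2: "multinom3 (m - i) (n - j) (i + j - k) * (fact (m - i) * fact (n - j) * fact (i + j - k)) = fact N"
    using multinom3_mult[of "m - i" "n - j" "i + j - k"] assms km kn unfolding N_def by simp
  have L: "K * (of_nat (multinom3 i j (N - i - j)) * coef m n k (m - i) (n - j)) = (-1)^k * of_int (int (fact N) * S)"
  proof -
    have "K * (of_nat (multinom3 i j (N - i - j)) * coef m n k (m - i) (n - j))
        = of_nat (multinom3 i j (N - i - j)) * (K * coef m n k (m - i) (n - j))" by (simp add: algebra_simps)
    also have "\<dots> = of_int (int (multinom3 i j (N - i - j) * (fact i * fact j * fact (N - i - j))) * ((-1)^k * S))"
      unfolding c1 sym using assms by (simp add: algebra_simps)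
    also have "\<dots> = (-1)^k * of_int (int (fact N) * S)" unfolding m1 by (simp add: algebra_simps)
    finally show ?thesis .
  qed
  have R: "K * ((-1)^k * of_nat (multinom3 (m - i) (n - j) (i + j - k)) * coef m n k i j) = (-1)^k * of_int (int (fact N) * S)"
  proof -
    have "K * ((-1)^k * of_nat (multinom3 (m - i) (n - j) (i + j - k)) * coef m n k i j)
        = (-1)^k * of_nat (multinom3 (m - i) (n - j) (i + j - k)) * (K * coef m n k i j)" by (simp add: algebra_simps)
    also have "\<dots> = (-1)^k * of_int (int (multinom3 (m - i) (n - j) (i + j - k) * (fact (m - i) * fact (n - j) * fact (i + j - k))) * S)"
      unfolding c2 by (simp add: algebra_simps)
    also have "\<dots> = (-1)^k * of_int (int (fact N) * S)" unfolding m2 ..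
    finally show ?thesis .
  qed
  have "K * (of_nat (multinom3 i j (N - i - j)) * coef m n k (m - i) (n - j))
      = K * ((-1)^k * of_nat (multinom3 (m - i) (n - j) (i + j - k)) * coef m n k i j)"
    using L R by simp
  then show ?thesis using K0 unfolding N_def by simp
qed

end
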